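(* Let $X$ be an arbitrary set and $P\subseteq X\times X$ a binary relation, and let $Q=\{(x,y)\in X\times X:(y,x)\notin P\}$. Then $P$ is complete and negatively transitive if and only if there is a family $\mathcal V$ of functions $v:X\to\mathbb R$ such that for all $x,y\in X$: $(x,y)\in Q$ if and only if $v(x)\geq v(y)$ for all $v\in\mathcal V$ and $v(x)>v(y)$ for some $v\in\mathcal V$ (i.e. $P$ is embeddable in $\mathbb R^{\mathcal V}$ with the Pareto order).
   Context: $P$ is complete if for all $x,y$, $(x,y)\in P$ or $(y,x)\in P$; negatively transitive if $(x,y)\notin P$ and $(y,z)\notin P$ imply $(x,z)\notin P$. The Pareto order on $\mathbb R^I$: $(x_\alpha)\succ(y_\alpha)$ iff $x_\alpha\geq y_\alpha$ for all $\alpha\in I$ and $x_\alpha>y_\alpha$ for some $\alpha\in I$; $x\succeq y$ means not $y\succ x$. *)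

theory Defs
  imports Complex_Main
begin

definition complete_on :: "'a set \<Rightarrow> ('a \<times> 'a) set \<Rightarrow> bool" where
  "complete_on X P \<longleftrightarrow> (\<forall>x\<in>X. \<forall>y\<in>X. (x, y) \<in> P \<or> (y, x) \<in> P)"

definition negatively_transitive_on :: "'a set \<Rightarrow> ('a \<times> 'a) set \<Rightarrow> bool" where
  "negatively_transitive_on X P \<longleftrightarrow>
     (\<forall>x\<in>X. \<forall>y\<in>X. \<forall>z\<in>X. (x, y) \<notin> P \<longrightarrow> (y, z) \<notin> P \<longrightarrow> (x, z) \<notin> P)"

end

theory Submission
  imports Defs
begin

theorem theorem10:
  fixes X :: "'a set" and P :: "('a \<times> 'a) set"
  assumes "P \<subseteq> X \<times> X"
  defines "Q \<equiv> {(x, y). x \<in> X \<and> y \<in> X \<and> (y, x) \<notin> P}"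
  shows "(complete_on X P \<and> negatively_transitive_on X P) \<longleftrightarrow>
    (\<exists>V :: ('a \<Rightarrow> real) set. \<forall>x\<in>X. \<forall>y\<in>X.
        (x, y) \<in> Q \<longleftrightarrow> ((\<forall>v\<in>V. v x \<ge> v y) \<and> (\<exists>v\<in>V. v x > v y)))"
proof
  assume H: "complete_on X P \<and> negatively_transitive_on X P"
  have refl: "\<And>x. x \<in> X \<Longrightarrow> (x, x) \<in> P" using H unfolding complete_on_def by blast
  have tr: "\<And>x y z. x \<in> X \<Longrightarrow> y \<in> X \<Longrightarrow> z \<in> X \<Longrightarrow> (y, x) \<notin> P \<Longrightarrow> (z, y) \<notin> P \<Longrightarrow> (z, x) \<notin> P"
    using H unfolding negatively_transitive_on_def by blast
  have cp: "\<And>x y. x \<in> X \<Longrightarrow> y \<in> X \<Longrightarrow> (x, y) \<in> P \<or> (y, x) \<in> P"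
    using H unfolding complete_on_def by blast
  define V :: "('a \<Rightarrow> real) set" where
    "V = (\<lambda>z. \<lambda>x. if x = z \<or> (x \<in> X \<and> z \<in> X \<and> (z, x) \<notin> P) then 1 else 0) ` X"
  show "\<exists>V :: ('a \<Rightarrow> real) set. \<forall>x\<in>X. \<forall>y\<in>X.
        (x, y) \<in> Q \<longleftrightarrow> ((\<forall>v\<in>V. v x \<ge> v y) \<and> (\<exists>v\<in>V. v x > v y))"
  proof (intro exI[of _ V] ballI iffI)
    fix x y assume x: "x \<in> X" and y: "y \<in> X" and q: "(x, y) \<in> Q"
    hence nyx: "(y, x) \<notin> P" unfolding Q_def by auto
    show "(\<forall>v\<in>V. v x \<ge> v y) \<and> (\<exists>v\<in>V. v x > v y)"
    proof
      show "\<forall>v\<in>V. v x \<ge> v y"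
      proof
        fix v assume "v \<in> V"
        then obtain z where z: "z \<in> X" and vd: "v = (\<lambda>x. if x = z \<or> (x \<in> X \<and> z \<in> X \<and> (z, x) \<notin> P) then 1 else 0)"
          unfolding V_def by blast
        have "y = z \<or> (z, y) \<notin> P \<Longrightarrow> x = z \<or> (z, x) \<notin> P"
          using tr[OF x y z] nyx by blast
        thus "v x \<ge> v y" unfolding vd using x y z by auto
      qed
      show "\<exists>v\<in>V. v x > v y"
      proof
        show "(\<lambda>w. if w = x \<or> (w \<in> X \<and> x \<in> X \<and> (x, w) \<notin> P) then 1 else 0 :: real) \<in> V"
          unfolding V_def using x by blast
        have "y \<noteq> x" using nyx refl x by blast
        moreover have "(x, y) \<in> P" using cp[OF x y] nyx by blast
        ultimately show "(\<lambda>w. if w = x \<or> (w \<in> X \<and> x \<in> X \<and> (x, w) \<notin> P) then 1 else 0 :: real) y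
           < (\<lambda>w. if w = x \<or> (w \<in> X \<and> x \<in> X \<and> (x, w) \<notin> P) then 1 else 0 :: real) x" by simp
      qed
    qed
  next
    fix x y assume x: "x \<in> X" and y: "y \<in> X"
      and p: "(\<forall>v\<in>V. v x \<ge> v y) \<and> (\<exists>v\<in>V. v x > v y)"
    have "x = y \<or> (y, x) \<notin> P"
    proof -
      have "(\<lambda>x. if x = y \<or> (x \<in> X \<and> y \<in> X \<and> (y, x) \<notin> P) then 1 else 0 :: real) \<in> V"
        unfolding V_def using y by auto
      note bspec[OF conjunct1[OF p] this]
      hence "(if x = y \<or> (x \<in> X \<and> y \<in> X \<and> (y, x) \<notin> P) then 1 else 0 :: real) \<ge> 1" by (simp only: if_True refl simp_thms)
      thus ?thesis by (auto split: if_splits)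
    qed
    moreover have "x \<noteq> y" using p by auto
    ultimately show "(x, y) \<in> Q" unfolding Q_def using x y by auto
  qed
next
  assume "\<exists>V :: ('a \<Rightarrow> real) set. \<forall>x\<in>X. \<forall>y\<in>X.
        (x, y) \<in> Q \<longleftrightarrow> ((\<forall>v\<in>V. v x \<ge> v y) \<and> (\<exists>v\<in>V. v x > v y))"
  then obtain V :: "('a \<Rightarrow> real) set" where V: "\<And>x y. x \<in> X \<Longrightarrow> y \<in> X \<Longrightarrow>
        (y, x) \<notin> P \<longleftrightarrow> ((\<forall>v\<in>V. v x \<ge> v y) \<and> (\<exists>v\<in>V. v x > v y))"
    unfolding Q_def by auto
  show "complete_on X P \<and> negatively_transitive_on X P"
    unfolding complete_on_def negatively_transitive_on_def
  proof (intro conjI ballI impI)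
    fix x y assume x: "x \<in> X" and y: "y \<in> X"
    show "(x, y) \<in> P \<or> (y, x) \<in> P"
    proof (rule ccontr)
      assume "\<not> ?thesis"
      hence "(x, y) \<notin> P" "(y, x) \<notin> P" by auto
      with V[OF x y] V[OF y x] obtain v where "v \<in> V" "v y > v x" "\<forall>v\<in>V. v x \<ge> v y" by auto
      thus False by (meson not_le)
    qed
  next
    fix x y z assume x: "x \<in> X" and y: "y \<in> X" and z: "z \<in> X"
      and a: "(x, y) \<notin> P" and b: "(y, z) \<notin> P"
    from V[OF y x] a have A: "(\<forall>v\<in>V. v y \<ge> v x) \<and> (\<exists>v\<in>V. v y > v x)" by auto
    from V[OF z y] b have B: "(\<forall>v\<in>V. v z \<ge> v y) \<and> (\<exists>v\<in>V. v z > v y)" by auto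
    have "(\<forall>v\<in>V. v z \<ge> v x) \<and> (\<exists>v\<in>V. v z > v x)"
    proof
      show "\<forall>v\<in>V. v z \<ge> v x" using A B by (meson order_trans)
      from A obtain v where "v \<in> V" "v y > v x" by auto
      with B show "\<exists>v\<in>V. v z > v x" by (meson less_le_trans)
    qed
    with V[OF z x] show "(x, z) \<notin> P" by auto
  qed
qed

end
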